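(* Under the standing assumptions below, for every $k\ge 1$ let $$\widetilde{X'_k}(1)=-\sum_{j=1}^{k}a_jX_{k+1-j}$$ be the Wiener–Kolmogorov one-step predictor truncated to the $k$ observations $X_1,\dots,X_k$. Then for every $\delta>0$, $$\mathbb{E}\big[(X_{k+1}-\widetilde{X'_k}(1))^2\big]=\sigma_\varepsilon^2+O(k^{-1+\delta})\qquad (k\to\infty).$$
   Context: Standing assumptions. Let $(X_n)_{n\in\mathbb Z}$ be a real, zero-mean, weakly stationary process in $L^2$ with autocovariance function $\sigma(j)=\mathbb E[X_nX_{n+j}]$, satisfying $\sum_{j\in\mathbb Z}|\sigma(j)|=\infty$. Assume $X_n=\sum_{j\ge0}b_j\varepsilon_{n-j}$ (convergence in $L^2$). Here $(\varepsilon_n)_{n\in\mathbb Z}$ is a sequence of uncorrelated random variables with mean $0$ and variance $\sigma_\varepsilon^2>0$, and $b_0=1$, $\sum_j b_j^2<\infty$. Assume also $\varepsilon_n=\sum_{j\ge0}a_jX_{n-j}$ with $a_0=1$ and $\sum_j|a_j|<\infty$. The power series $A(z)=\sum_{j\ge0}a_jz^j$ and $B(z)=\sum_{j\ge0}b_jz^j$ satisfy $A(z)B(z)=1$ for $|z|\le1$. Fix $d\in(0,1/2)$. Assume that for every $\delta>0$ there exist constants $C_1,C_2$ (depending on $\delta$) such that $|a_j|\le C_1j^{-d-1+\delta}$ and $|b_j|\le C_2j^{d-1+\delta}$ for all $j\ge1$. *)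

theory Defs
  imports "HOL-Probability.Probability" "HOL-Library.Landau_Symbols"
begin

definition WK_trunc_pred :: "(nat \<Rightarrow> real) \<Rightarrow> (int \<Rightarrow> 'a \<Rightarrow> real) \<Rightarrow> nat \<Rightarrow> 'a \<Rightarrow> real" where
  "WK_trunc_pred a X k \<omega> = - (\<Sum>j = 1..k. a j * X (int k + 1 - int j) \<omega>)"

end

theory Submission
  imports Defs
begin


lemma pstep:
  fixes x r :: real
  assumes "x \<ge> 1" "r > 0" "r \<noteq> 1"
  shows "(x+1) powr (-r) \<le> ((x+1) powr (1-r) - x powr (1-r)) / (1-r)"
proof -
  have "\<exists>z. x < z \<and> z < x+1 \<and> ((x+1) powr (1-r) / (1-r) - x powr (1-r) / (1-r) = (x+1-x) * z powr (-r))"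
  proof (rule MVT2)
    fix y assume "x \<le> y" "y \<le> x+1"
    then have "y > 0" using assms by auto
    have "((\<lambda>y. y powr (1-r)) has_real_derivative (1-r) * y powr (1-r-1)) (at y)"
      using has_real_derivative_powr[OF \<open>y>0\<close>] by blast
    then have "((\<lambda>y. y powr (1-r) / (1-r)) has_real_derivative (1-r) * y powr (1-r-1) / (1-r)) (at y)"
      by (intro DERIV_cdivide)
    moreover have "(1-r) * y powr (1-r-1) / (1-r) = y powr (-r)" using assms by simp
    ultimately show "((\<lambda>y. y powr (1-r) / (1-r)) has_real_derivative y powr (-r)) (at y)" by simp
  qed auto
  then obtain z where z: "x < z" "z < x+1" "(x+1) powr (1-r) / (1-r) - x powr (1-r) / (1-r) = z powr (-r)" by auto
  have "(x+1) powr (-r) \<le> z powr (-r)" using z assms by (intro powr_mono2') auto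
  also have "\<dots> = ((x+1) powr (1-r) - x powr (1-r)) / (1-r)" using z(3) by (simp add: diff_divide_distrib)
  finally show ?thesis .
qed

lemma alg1: "(r::real) \<noteq> 1 \<Longrightarrow> (u - v)/(1-r) + (w - v)/(r-1) = (w - u)/(r-1)"
proof -
  assume "r \<noteq> 1"
  then have "(u - v)/(1-r) = (v - u)/(r-1)" by (simp add: divide_simps) argo
  then show ?thesis by (simp add: diff_divide_distrib)
qed

lemma alg2: "(r::real) \<noteq> 1 \<Longrightarrow> (u - v)/(1-r) + v/(1-r) = u/(1-r)"
  by (simp add: diff_divide_distrib)

lemma tail_sum:
  fixes r :: real
  assumes "r > 1" "k \<ge> 1"
  shows "(\<Sum>j\<in>{k<..N}. real j powr (-r)) \<le> real k powr (1-r) / (r-1)"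
proof -
  have "N \<ge> k \<Longrightarrow> (\<Sum>j\<in>{k<..N}. real j powr (-r)) \<le> (real k powr (1-r) - real N powr (1-r)) / (r-1)" for N
  proof (induction N)
    case 0 then show ?case by simp
  next
    case (Suc N)
    show ?case
    proof (cases "N \<ge> k")
      case True
      have st: "(real N + 1) powr (-r) \<le> ((real N+1) powr (1-r) - real N powr (1-r)) / (1-r)"
        using True assms by (intro pstep) auto
      have e: "{k<..Suc N} = insert (Suc N) {k<..N}" using True by auto
      have "(\<Sum>j\<in>{k<..Suc N}. real j powr (-r)) = (real N + 1) powr (-r) + (\<Sum>j\<in>{k<..N}. real j powr (-r))"
        by (simp add: e add.commute)
      also have "\<dots> \<le> ((real N+1) powr (1-r) - real N powr (1-r)) / (1-r) + (real k powr (1-r) - real N powr (1-r)) / (r-1)"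
        using st Suc True by (intro add_mono) auto
      also have "\<dots> = (real k powr (1-r) - (real N + 1) powr (1-r)) / (r-1)"
        using assms alg1 by force
      also have "\<dots> = (real k powr (1-r) - real (Suc N) powr (1-r)) / (r-1)"
        by (simp add: add.commute)
      finally show ?thesis .
    next
      case False
      then have "k = Suc N" using Suc by auto
      then show ?thesis by simp
    qed
  qed
  then have "N \<ge> k \<Longrightarrow> ?thesis" using assms by (smt (verit) divide_right_mono powr_ge_zero)
  moreover have "N < k \<Longrightarrow> ?thesis" using assms by simp
  ultimately show ?thesis by linarith
qed

lemma head_sum:
  fixes r :: real
  assumes "r > 0" "r < 1"
  shows "(\<Sum>j\<in>{1..n}. real j powr (-r)) \<le> real n powr (1-r) / (1-r)"
proof (induction n)
  case 0 then show ?case by simp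
next
  case (Suc n)
  show ?case
  proof (cases "n = 0")
    case True then show ?thesis using assms by (simp add: field_simps)
  next
    case False
    have st: "(real n + 1) powr (-r) \<le> ((real n+1) powr (1-r) - real n powr (1-r)) / (1-r)"
      using False assms by (intro pstep) auto
    have "(\<Sum>j\<in>{1..Suc n}. real j powr (-r)) = (real n + 1) powr (-r) + (\<Sum>j\<in>{1..n}. real j powr (-r))"
      by (simp add: add.commute)
    also have "\<dots> \<le> ((real n+1) powr (1-r) - real n powr (1-r)) / (1-r) + real n powr (1-r) / (1-r)"
      using st Suc by (intro add_mono) auto
    also have "\<dots> = (real n + 1) powr (1-r) / (1-r)"
      using assms alg2 by force
    also have "\<dots> = real (Suc n) powr (1-r) / (1-r)"
      by (simp add: add.commute)
    finally show ?thesis .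
  qed
qed


lemma half_powr: "(m::real) > 0 \<Longrightarrow> (m/2) powr (-p) = 2 powr p * m powr (-p)"
  by (simp add: powr_divide powr_minus divide_simps)

lemma sq_powr: "(m::real) > 0 \<Longrightarrow> (m powr e)\<^sup>2 = m powr (2*e)"
  by (simp add: power2_eq_square powr_add[symmetric])

lemma sq_sum_le: "((x::real) + y)\<^sup>2 \<le> 2 * x\<^sup>2 + 2 * y\<^sup>2"
proof -
  have "0 \<le> (x-y)\<^sup>2" by simp
  then show ?thesis by (simp add: power2_eq_square algebra_simps)
qed

lemma coef_bound:
  fixes a b :: "nat \<Rightarrow> real" and A B p q :: real
  assumes conv: "\<And>m. m \<ge> 1 \<Longrightarrow> (\<Sum>i\<le>m. a i * b (m-i)) = 0"
    and b0: "b 0 = 1" and A0: "A \<ge> 0" and B0: "B \<ge> 0"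
    and abd: "\<And>j. j \<ge> 1 \<Longrightarrow> \<bar>a j\<bar> \<le> A * real j powr (-p)"
    and bbd: "\<And>j. j \<ge> 1 \<Longrightarrow> \<bar>b j\<bar> \<le> B * real j powr (-q)"
    and p1: "p > 1" and q1: "1/2 < q" and q2: "q < 1" and pq: "p + q > 3/2"
  shows "\<exists>K. \<forall>k\<ge>1. \<forall>N. (\<Sum>m\<in>{k<..<N}. (\<Sum>j\<le>k. a j * b (m-j))\<^sup>2) \<le> K * real k powr (3 - 2*p - 2*q)"
proof -
  define Cb where "Cb = 1 + B/(1-q)"
  define K1 where "K1 = A * 2 powr p * Cb"
  define K2 where "K2 = B * 2 powr q * A/(p-1)"
  have bsum: "(\<Sum>i<m. \<bar>b i\<bar>) \<le> Cb * real m powr (1-q)" if "m \<ge> 1" for m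
  proof -
    have "{..<m} = insert 0 {1..<m}" using that by auto
    then have "(\<Sum>i<m. \<bar>b i\<bar>) = 1 + (\<Sum>i\<in>{1..<m}. \<bar>b i\<bar>)" using b0 by simp
    also have "(\<Sum>i\<in>{1..<m}. \<bar>b i\<bar>) \<le> (\<Sum>i\<in>{1..m}. B * real i powr (-q))"
      by (rule order_trans[OF sum_mono sum_mono2]) (use bbd B0 in auto)
    also have "\<dots> = B * (\<Sum>i\<in>{1..m}. real i powr (-q))" by (simp add: sum_distrib_left)
    also have "\<dots> \<le> B * (real m powr (1-q) / (1-q))"
      using head_sum[of q m] q1 q2 B0 by (intro mult_left_mono) auto
    finally have "(\<Sum>i<m. \<bar>b i\<bar>) \<le> 1 + B * (real m powr (1-q) / (1-q))" by simp
    moreover have "1 \<le> real m powr (1-q)" using that q2 by (intro ge_one_powr_ge_zero) auto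
    ultimately show ?thesis unfolding Cb_def using B0 q2 by (simp add: algebra_simps) 
  qed
  have asum: "(\<Sum>j\<in>{k<..m}. \<bar>a j\<bar>) \<le> A * (real k powr (1-p) / (p-1))" if "k \<ge> 1" for k m
  proof -
    have "(\<Sum>j\<in>{k<..m}. \<bar>a j\<bar>) \<le> (\<Sum>j\<in>{k<..m}. A * real j powr (-p))"
      by (rule sum_mono) (use abd that in auto)
    also have "\<dots> = A * (\<Sum>j\<in>{k<..m}. real j powr (-p))" by (simp add: sum_distrib_left)
    also have "\<dots> \<le> A * (real k powr (1-p) / (p-1))"
      using tail_sum[of p k m] p1 that A0 by (intro mult_left_mono) auto
    finally show ?thesis .
  qed
  have cb: "\<bar>\<Sum>j\<le>k. a j * b (m-j)\<bar> \<le> K1 * real m powr (1-p-q) + K2 * real m powr (-q) * real k powr (1-p)"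
    if k: "k \<ge> 1" and km: "k < m" for k m
  proof -
    have mpos: "real m > 0" using k km by simp
    have split: "{..m} = {..k} \<union> {k<..m}" using km by auto
    have "(\<Sum>i\<le>m. a i * b (m-i)) = (\<Sum>j\<le>k. a j * b (m-j)) + (\<Sum>j\<in>{k<..m}. a j * b (m-j))"
      unfolding split by (rule sum.union_disjoint) auto
    then have ce: "(\<Sum>j\<le>k. a j * b (m-j)) = - (\<Sum>j\<in>{k<..m}. a j * b (m-j))" using conv[of m] km by simp
    have "\<bar>\<Sum>j\<le>k. a j * b (m-j)\<bar> \<le> (\<Sum>j\<in>{k<..m}. \<bar>a j\<bar> * \<bar>b (m-j)\<bar>)"
      unfolding ce abs_minus_cancel by (rule order_trans[OF sum_abs]) (simp add: abs_mult)
    also have "\<dots> \<le> (\<Sum>j\<in>{k<..m}. A * (2 powr p * real m powr (-p)) * \<bar>b (m-j)\<bar> + \<bar>a j\<bar> * (B * (2 powr q * real m powr (-q))))"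
    proof (rule sum_mono)
      fix j assume j: "j \<in> {k<..m}"
      show "\<bar>a j\<bar> * \<bar>b (m-j)\<bar> \<le> A * (2 powr p * real m powr (-p)) * \<bar>b (m-j)\<bar> + \<bar>a j\<bar> * (B * (2 powr q * real m powr (-q)))"
      proof (cases "2*j \<ge> m")
        case True
        have "real j powr (-p) \<le> (real m/2) powr (-p)"
          using True mpos p1 by (intro powr_mono2') auto
        then have "\<bar>a j\<bar> \<le> A * (2 powr p * real m powr (-p))"
        proof -
          have "j \<ge> 1" using j k by auto
          then have "\<bar>a j\<bar> \<le> A * real j powr (-p)" by (rule abd)
          also have "\<dots> \<le> A * (real m/2) powr (-p)" using \<open>real j powr (-p) \<le> (real m/2) powr (-p)\<close> A0 by (rule mult_left_mono)
          finally show ?thesis using half_powr[OF mpos, of p] by simp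
        qed
        then have "\<bar>a j\<bar> * \<bar>b (m-j)\<bar> \<le> A * (2 powr p * real m powr (-p)) * \<bar>b (m-j)\<bar>"
          by (intro mult_right_mono) auto
        moreover have "0 \<le> \<bar>a j\<bar> * (B * (2 powr q * real m powr (-q)))" using B0 by simp
        ultimately show ?thesis by linarith
      next
        case False
        then have i1: "m - j \<ge> 1" and i2: "real m / 2 \<le> real (m-j)" by auto
        have "real (m-j) powr (-q) \<le> (real m/2) powr (-q)"
          using i2 mpos q1 by (intro powr_mono2') auto
        then have "\<bar>b (m-j)\<bar> \<le> B * (2 powr q * real m powr (-q))"
          using bbd[OF i1] B0 half_powr[OF mpos, of q] by (smt (verit) mult_left_mono)
        then have "\<bar>a j\<bar> * \<bar>b (m-j)\<bar> \<le> \<bar>a j\<bar> * (B * (2 powr q * real m powr (-q)))"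
          by (intro mult_left_mono) auto
        moreover have "0 \<le> A * (2 powr p * real m powr (-p)) * \<bar>b (m-j)\<bar>" using A0 by simp
        ultimately show ?thesis by linarith
      qed
    qed
    also have "\<dots> = A * (2 powr p * real m powr (-p)) * (\<Sum>j\<in>{k<..m}. \<bar>b (m-j)\<bar>) + (B * (2 powr q * real m powr (-q))) * (\<Sum>j\<in>{k<..m}. \<bar>a j\<bar>)"
      by (simp add: sum.distrib sum_distrib_left sum_distrib_right mult.commute)
    also have "\<dots> \<le> A * (2 powr p * real m powr (-p)) * (Cb * real m powr (1-q)) + (B * (2 powr q * real m powr (-q))) * (A * (real k powr (1-p) / (p-1)))"
    proof (intro add_mono mult_left_mono)
      have "(\<Sum>j\<in>{k<..m}. \<bar>b (m-j)\<bar>) = (\<Sum>i\<in>(\<lambda>j. m-j) ` {k<..m}. \<bar>b i\<bar>)"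
        by (subst sum.reindex) (auto simp: inj_on_def)
      also have "\<dots> \<le> (\<Sum>i<m. \<bar>b i\<bar>)" by (rule sum_mono2) auto
      also have "\<dots> \<le> Cb * real m powr (1-q)" using bsum km by simp
      finally show "(\<Sum>j\<in>{k<..m}. \<bar>b (m-j)\<bar>) \<le> Cb * real m powr (1-q)" .
      show "(\<Sum>j\<in>{k<..m}. \<bar>a j\<bar>) \<le> A * (real k powr (1-p) / (p-1))" using asum k by simp
    qed (use A0 B0 in auto)
    also have "\<dots> = K1 * real m powr (1-p-q) + K2 * real m powr (-q) * real k powr (1-p)"
    proof -
      have e: "-p + (1-q) = 1-p-q" by simp
      have "real m powr (-p) * real m powr (1-q) = real m powr (1-p-q)" by (metis powr_add e)
      then show ?thesis unfolding K1_def K2_def by (simp add: field_simps)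
    qed
    finally show ?thesis .
  qed
  define K where "K = 2*K1\<^sup>2 / (2*p+2*q-3) + 2*K2\<^sup>2 / (2*q-1)"
  show ?thesis
  proof (intro exI allI impI)
    fix k N :: nat assume k: "k \<ge> 1"
    have "(\<Sum>m\<in>{k<..<N}. (\<Sum>j\<le>k. a j * b (m-j))\<^sup>2) \<le>
          (\<Sum>m\<in>{k<..<N}. 2*K1\<^sup>2 * real m powr (-(2*p+2*q-2)) + 2*K2\<^sup>2 * real k powr (2-2*p) * real m powr (-(2*q)))"
    proof (rule sum_mono)
      fix m assume m: "m \<in> {k<..<N}"
      then have mpos: "real m > 0" using k by simp
      have "(\<Sum>j\<le>k. a j * b (m-j))\<^sup>2 \<le> (K1 * real m powr (1-p-q) + K2 * real m powr (-q) * real k powr (1-p))\<^sup>2"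
      proof -
        have "\<bar>\<Sum>j\<le>k. a j * b (m-j)\<bar>\<^sup>2 \<le> (K1 * real m powr (1-p-q) + K2 * real m powr (-q) * real k powr (1-p))\<^sup>2"
          by (rule power_mono[OF cb[OF k]]) (use m in auto)
        then show ?thesis by simp
      qed
      also have "\<dots> \<le> 2 * (K1 * real m powr (1-p-q))\<^sup>2 + 2 * (K2 * real m powr (-q) * real k powr (1-p))\<^sup>2"
        by (rule sq_sum_le)
      also have "\<dots> = 2*K1\<^sup>2 * real m powr (-(2*p+2*q-2)) + 2*K2\<^sup>2 * real k powr (2-2*p) * real m powr (-(2*q))"
        using mpos k by (simp add: power_mult_distrib sq_powr algebra_simps)
      finally show "(\<Sum>j\<le>k. a j * b (m-j))\<^sup>2 \<le> 2*K1\<^sup>2 * real m powr (-(2*p+2*q-2)) + 2*K2\<^sup>2 * real k powr (2-2*p) * real m powr (-(2*q))" .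
    qed
    also have "\<dots> = 2*K1\<^sup>2 * (\<Sum>m\<in>{k<..<N}. real m powr (-(2*p+2*q-2))) + 2*K2\<^sup>2 * real k powr (2-2*p) * (\<Sum>m\<in>{k<..<N}. real m powr (-(2*q)))"
      by (simp add: sum.distrib sum_distrib_left)
    also have "\<dots> \<le> 2*K1\<^sup>2 * (real k powr (1-(2*p+2*q-2)) / ((2*p+2*q-2)-1)) + 2*K2\<^sup>2 * real k powr (2-2*p) * (real k powr (1-2*q) / (2*q-1))"
    proof (intro add_mono mult_left_mono)
      have sub: "{k<..<N} \<subseteq> {k<..N}" by auto
      show "(\<Sum>m\<in>{k<..<N}. real m powr (-(2*p+2*q-2))) \<le> real k powr (1-(2*p+2*q-2)) / ((2*p+2*q-2)-1)"
        by (rule order_trans[OF sum_mono2[OF _ sub] tail_sum]) (use pq k in auto)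
      show "(\<Sum>m\<in>{k<..<N}. real m powr (-(2*q))) \<le> real k powr (1-2*q) / (2*q-1)"
        using order_trans[OF sum_mono2[OF _ sub] tail_sum[of "2*q" k N]] q1 k by auto
    qed auto
    also have "\<dots> = K * real k powr (3 - 2*p - 2*q)"
    proof -
      have e: "(2-2*p) + (1-2*q) = 3 - 2*p - 2*q" by simp
      have "real k powr (2-2*p) * real k powr (1-2*q) = real k powr (3 - 2*p - 2*q)" by (metis powr_add e)
      moreover have "1-(2*p+2*q-2) = 3 - 2*p - 2*q" "(2*p+2*q-2)-1 = 2*p+2*q-3" by simp_all
      ultimately show ?thesis unfolding K_def by (simp add: field_simps)
    qed
    finally show "(\<Sum>m\<in>{k<..<N}. (\<Sum>j\<le>k. a j * b (m-j))\<^sup>2) \<le> K * real k powr (3 - 2*p - 2*q)" .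
  qed
qed



lemma powser_unique0:
  fixes c :: "nat \<Rightarrow> complex"
  assumes S: "\<And>z. norm z < 1 \<Longrightarrow> (\<lambda>n. c n * z^n) sums 0"
  shows "c n = 0"
proof (induction n rule: less_induct)
  case (less n)
  have sh: "(\<lambda>i. c (i+n) * z^i) sums 0" if z: "z \<noteq> 0" "norm z < 1" for z
  proof -
    have "(\<Sum>i<n. c i * z^i) = 0" using less by simp
    then have "(\<lambda>i. c (i+n) * z^(i+n)) sums 0"
      using S[OF z(2)] sums_iff_shift[of "\<lambda>i. c i * z^i" n 0] by simp
    then have "(\<lambda>i. c (i+n) * z^(i+n) * inverse (z^n)) sums (0 * inverse (z^n))"
      by (rule sums_mult2)
    moreover have "c (i+n) * z^(i+n) * inverse (z^n) = c (i+n) * z^i" for i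
      using z by (simp add: power_add)
    ultimately show ?thesis by simp
  qed
  have "((\<lambda>_. 0::complex) \<longlongrightarrow> (\<lambda>i. c (i+n)) 0) (at (0::complex))"
    by (rule powser_limit_0_strong[where f="\<lambda>_. 0" and s=1 and a="\<lambda>i. c (i+n)"]) (use sh in auto)
  then show ?case using tendsto_const tendsto_unique[OF at_neq_bot] by (metis add_0)
qed

lemma conv_id:
  fixes a b :: "nat \<Rightarrow> real"
  assumes a0: "a 0 = 1" and b0: "b 0 = 1"
    and b_sq: "summable (\<lambda>j. (b j)\<^sup>2)"
    and a_abs: "summable (\<lambda>j. \<bar>a j\<bar>)"
    and AB: "\<And>z::complex. norm z \<le> 1 \<Longrightarrow> summable (\<lambda>j. complex_of_real (b j) * z ^ j) \<Longrightarrow>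
               (\<Sum>j. complex_of_real (a j) * z ^ j) * (\<Sum>j. complex_of_real (b j) * z ^ j) = 1"
  shows "(\<Sum>i\<le>m. a i * b (m-i)) = (if m = 0 then 1 else 0)"
proof -
  define cv where "cv m = (\<Sum>i\<le>m. a i * b (m-i))" for m
  have S: "(\<lambda>k. complex_of_real (cv k) * z^k) sums 1" if z: "norm z < 1" for z :: complex
  proof -
    have na: "summable (\<lambda>k. norm (complex_of_real (a k) * z^k))"
    proof (rule summable_comparison_test[OF _ a_abs])
      show "\<exists>N. \<forall>n\<ge>N. norm (norm (complex_of_real (a n) * z ^ n)) \<le> \<bar>a n\<bar>"
        using z by (auto simp: norm_mult norm_power intro!: mult_left_le power_le_one)
    qed
    have nb: "summable (\<lambda>k. norm (complex_of_real (b k) * z^k))"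
    proof (rule summable_comparison_test)
      show "summable (\<lambda>k. norm z ^ k + (b k)\<^sup>2)"
        using z b_sq by (intro summable_add) auto
      show "\<exists>N. \<forall>n\<ge>N. norm (norm (complex_of_real (b n) * z ^ n)) \<le> norm z ^ n + (b n)\<^sup>2"
      proof (intro exI allI impI)
        fix n :: nat
        have t: "0 \<le> norm z ^ n" "norm z ^ n \<le> 1" using z by (auto intro: power_le_one)
        have "\<bar>b n\<bar> * norm z ^ n \<le> norm z ^ n + (b n)\<^sup>2"
        proof (cases "\<bar>b n\<bar> \<le> 1")
          case True
          then have "\<bar>b n\<bar> * norm z ^ n \<le> norm z ^ n" using t mult_left_le_one_le[of "norm z ^ n" "\<bar>b n\<bar>"] by simp
          then show ?thesis by (simp add: add_increasing2)
        next
          case False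
          then have "\<bar>b n\<bar> * 1 \<le> \<bar>b n\<bar> * \<bar>b n\<bar>" by (intro mult_left_mono) auto
          then have "\<bar>b n\<bar> \<le> (b n)\<^sup>2" by (simp add: power2_eq_square)
          moreover have "\<bar>b n\<bar> * norm z ^ n \<le> \<bar>b n\<bar>" using t mult_left_le[of "norm z ^ n" "\<bar>b n\<bar>"] by simp
          ultimately show ?thesis using t by linarith
        qed
        then show "norm (norm (complex_of_real (b n) * z ^ n)) \<le> norm z ^ n + (b n)\<^sup>2"
          by (simp add: norm_mult norm_power)
      qed
    qed
    have "(\<lambda>k. \<Sum>i\<le>k. (complex_of_real (a i) * z^i) * (complex_of_real (b (k-i)) * z^(k-i)))
           sums ((\<Sum>k. complex_of_real (a k) * z^k) * (\<Sum>k. complex_of_real (b k) * z^k))"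
      by (rule Cauchy_product_sums[OF na nb])
    moreover have "(\<Sum>k. complex_of_real (a k) * z^k) * (\<Sum>k. complex_of_real (b k) * z^k) = 1"
      using z by (intro AB summable_norm_cancel[OF nb]) auto
    moreover have "(\<Sum>i\<le>k. (complex_of_real (a i) * z^i) * (complex_of_real (b (k-i)) * z^(k-i)))
                 = complex_of_real (cv k) * z^k" for k
    proof -
      have "(\<Sum>i\<le>k. (complex_of_real (a i) * z^i) * (complex_of_real (b (k-i)) * z^(k-i)))
           = (\<Sum>i\<le>k. complex_of_real (a i * b (k-i)) * z^k)"
        by (intro sum.cong refl) (simp add: power_add[symmetric])
      also have "\<dots> = complex_of_real (cv k) * z^k"
        by (simp add: cv_def sum_distrib_right)
      finally show ?thesis .
    qed
    ultimately show ?thesis by simp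
  qed
  have "(\<lambda>k. (complex_of_real (cv k) - (if k = 0 then 1 else 0)) * z^k) sums 0" if z: "norm z < 1" for z :: complex
  proof -
    have e: "(\<lambda>k. (if k = 0 then 1 else 0) * z^k) = (\<lambda>k. if k = 0 then (1::complex) else 0)" by auto
    have "(\<lambda>k. if k = 0 then (1::complex) else 0) sums 1" using sums_single[of 0 "\<lambda>_. (1::complex)"] by simp
    then have "(\<lambda>k. (if k = 0 then 1 else 0) * z^k) sums 1" by (subst e)
    from sums_diff[OF S[OF z] this] show ?thesis by (simp add: left_diff_distrib)
  qed
  then have "complex_of_real (cv m) - (if m = 0 then 1 else 0) = 0"
    by (rule powser_unique0)
  then have "cv m = (if m = 0 then 1 else 0)" by (auto split: if_splits)
  then show ?thesis unfolding cv_def .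
qed



definition sqi :: "'a measure \<Rightarrow> ('a \<Rightarrow> real) \<Rightarrow> bool" where
  "sqi M f \<longleftrightarrow> f \<in> borel_measurable M \<and> integrable M (\<lambda>x. (f x)\<^sup>2)"

lemma abs_prod_le: "\<bar>(u::real) * v\<bar> \<le> u\<^sup>2 + v\<^sup>2"
proof -
  have "0 \<le> (\<bar>u\<bar> - \<bar>v\<bar>)\<^sup>2" by simp
  then have "2 * (\<bar>u\<bar> * \<bar>v\<bar>) \<le> u\<^sup>2 + v\<^sup>2" by (simp add: power2_eq_square algebra_simps)
  moreover have "0 \<le> \<bar>u\<bar> * \<bar>v\<bar>" by simp
  ultimately show ?thesis unfolding abs_mult by linarith
qed

lemma my_abs_bound:
  fixes f g :: "'a \<Rightarrow> real"
  assumes "integrable M g" "\<And>x. \<bar>f x\<bar> \<le> g x"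
  shows "\<bar>\<integral>x. f x \<partial>M\<bar> \<le> (\<integral>x. g x \<partial>M)"
proof -
  have "\<bar>\<integral>x. f x \<partial>M\<bar> \<le> (\<integral>x. norm (f x) \<partial>M)" using integral_norm_bound[of M f] by simp
  also have "\<dots> \<le> (\<integral>x. g x \<partial>M)"
    by (rule integral_mono') (use assms in \<open>auto intro: order_trans[OF abs_ge_zero]\<close>)
  finally show ?thesis .
qed

lemma amgm: "(s::real) > 0 \<Longrightarrow> \<bar>u * v\<bar> \<le> (u\<^sup>2 / s + s * v\<^sup>2) / 2"
proof -
  assume s: "s > 0"
  have "0 \<le> (\<bar>u\<bar> - s * \<bar>v\<bar>)\<^sup>2" by simp
  then have "2 * s * (\<bar>u\<bar> * \<bar>v\<bar>) \<le> u\<^sup>2 + s * (s * v\<^sup>2)" by (simp add: power2_eq_square algebra_simps)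
  then have "\<bar>u\<bar> * \<bar>v\<bar> \<le> (u\<^sup>2 + s * (s * v\<^sup>2)) / (2 * s)" using s by (simp add: field_simps)
  also have "(u\<^sup>2 + s * (s * v\<^sup>2)) / (2 * s) = (u\<^sup>2 / s + s * v\<^sup>2) / 2" using s by (simp add: field_simps power2_eq_square)
  finally show ?thesis by (simp add: abs_mult)
qed

lemma sqi_prod: "sqi M f \<Longrightarrow> sqi M g \<Longrightarrow> integrable M (\<lambda>x. f x * g x)"
  unfolding sqi_def
  by (rule Bochner_Integration.integrable_bound[where f="\<lambda>x. (f x)\<^sup>2 + (g x)\<^sup>2"]) (auto intro!: AE_I2 simp: abs_prod_le)

lemma sqi_add: "sqi M f \<Longrightarrow> sqi M g \<Longrightarrow> sqi M (\<lambda>x. f x + g x)"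
proof -
  assume f: "sqi M f" and g: "sqi M g"
  have "integrable M (\<lambda>x. (f x)\<^sup>2 + 2 * (f x * g x) + (g x)\<^sup>2)"
    using f g sqi_prod[OF f g] unfolding sqi_def by auto
  moreover have "(\<lambda>x. (f x + g x)\<^sup>2) = (\<lambda>x. (f x)\<^sup>2 + 2 * (f x * g x) + (g x)\<^sup>2)"
    by (simp add: power2_sum algebra_simps)
  ultimately show ?thesis using f g unfolding sqi_def by auto
qed

lemma sqi_cmult: "sqi M f \<Longrightarrow> sqi M (\<lambda>x. c * f x)"
  unfolding sqi_def by (auto simp: power_mult_distrib)

lemma sqi_diff: "sqi M f \<Longrightarrow> sqi M g \<Longrightarrow> sqi M (\<lambda>x. f x - g x)"
  using sqi_add[of M f "\<lambda>x. (-1) * g x"] sqi_cmult[of M g "-1"] by simp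

lemma sqi_sum: "finite S \<Longrightarrow> (\<And>i. i \<in> S \<Longrightarrow> sqi M (f i)) \<Longrightarrow> sqi M (\<lambda>x. \<Sum>i\<in>S. f i x)"
proof (induction S rule: finite_induct)
  case empty then show ?case by (simp add: sqi_def)
next
  case (insert i S)
  then show ?case using sqi_add[of M "f i" "\<lambda>x. \<Sum>i\<in>S. f i x"] by simp
qed

lemma L2_conv:
  fixes f :: "nat \<Rightarrow> 'a \<Rightarrow> real"
  assumes sf: "\<And>N. sqi M (f N)" and sg: "sqi M g"
    and lim: "(\<lambda>N. \<integral>x. (f N x - g x)\<^sup>2 \<partial>M) \<longlonglongrightarrow> 0"
  shows "(\<lambda>N. \<integral>x. (f N x)\<^sup>2 \<partial>M) \<longlonglongrightarrow> (\<integral>x. (g x)\<^sup>2 \<partial>M)"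
proof -
  define w where "w N = (\<integral>x. (f N x - g x)\<^sup>2 \<partial>M)" for N
  define F where "F = (\<integral>x. (g x)\<^sup>2 \<partial>M)"
  define s where "s N = sqrt (w N + inverse (real (Suc N)))" for N
  have w0: "w N \<ge> 0" for N unfolding w_def by simp
  have spos: "s N > 0" for N
  proof -
    have "inverse (real (Suc N)) > 0" by simp
    then have "w N + inverse (real (Suc N)) > 0" using w0[of N] by linarith
    then show ?thesis unfolding s_def by simp
  qed
  have ws: "w N \<le> (s N)\<^sup>2" for N unfolding s_def using w0[of N] by simp
  have bnd: "\<bar>(\<integral>x. (f N x)\<^sup>2 \<partial>M) - F\<bar> \<le> s N * (1 + 2 * w N + 8 * F) / 2" for N
  proof -
    have su: "sqi M (\<lambda>x. f N x - g x)" using sf sg by (rule sqi_diff)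
    have sv: "sqi M (\<lambda>x. f N x + g x)" using sf sg by (rule sqi_add)
    have iu: "integrable M (\<lambda>x. (f N x - g x)\<^sup>2)" using su unfolding sqi_def by auto
    have ig: "integrable M (\<lambda>x. (g x)\<^sup>2)" using sg unfolding sqi_def by auto
    have if2: "integrable M (\<lambda>x. (f N x)\<^sup>2)" using sf unfolding sqi_def by auto
    have "(\<integral>x. (f N x)\<^sup>2 \<partial>M) - F = (\<integral>x. (f N x - g x) * (f N x + g x) \<partial>M)"
      unfolding F_def using if2 ig by (simp add: power2_eq_square algebra_simps)
    also have "\<bar>\<dots>\<bar> \<le> (\<integral>x. ((f N x - g x)\<^sup>2 / s N + s N * (2 * (f N x - g x)\<^sup>2 + 8 * (g x)\<^sup>2)) / 2 \<partial>M)"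
    proof (rule my_abs_bound)
      show "integrable M (\<lambda>x. ((f N x - g x)\<^sup>2 / s N + s N * (2 * (f N x - g x)\<^sup>2 + 8 * (g x)\<^sup>2)) / 2)"
        using iu ig by auto
      fix x
      have "\<bar>(f N x - g x) * (f N x + g x)\<bar> \<le> ((f N x - g x)\<^sup>2 / s N + s N * (f N x + g x)\<^sup>2) / 2"
        by (rule amgm[OF spos])
      moreover have "(f N x + g x)\<^sup>2 \<le> 2 * (f N x - g x)\<^sup>2 + 8 * (g x)\<^sup>2"
      proof -
        have "0 \<le> (f N x - 3 * g x)\<^sup>2" by simp
        then show ?thesis by (simp add: power2_eq_square algebra_simps)
      qed
      then have "s N * (f N x + g x)\<^sup>2 \<le> s N * (2 * (f N x - g x)\<^sup>2 + 8 * (g x)\<^sup>2)"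
        using spos[of N] by (intro mult_left_mono) auto
      then have "((f N x - g x)\<^sup>2 / s N + s N * (f N x + g x)\<^sup>2) / 2 \<le> ((f N x - g x)\<^sup>2 / s N + s N * (2 * (f N x - g x)\<^sup>2 + 8 * (g x)\<^sup>2)) / 2"
        by (intro divide_right_mono add_left_mono) auto
      ultimately show "\<bar>(f N x - g x) * (f N x + g x)\<bar> \<le> ((f N x - g x)\<^sup>2 / s N + s N * (2 * (f N x - g x)\<^sup>2 + 8 * (g x)\<^sup>2)) / 2"
        by (rule order_trans)
    qed
    also have "\<dots> = (w N / s N + s N * (2 * w N + 8 * F)) / 2"
      unfolding w_def F_def using iu ig by simp
    also have "\<dots> \<le> s N * (1 + 2 * w N + 8 * F) / 2"
    proof -
      have "w N / s N \<le> s N" using ws[of N] spos[of N] by (simp add: divide_simps power2_eq_square)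
      then have "(w N / s N + s N * (2 * w N + 8 * F)) / 2 \<le> (s N + s N * (2 * w N + 8 * F)) / 2"
        by (intro divide_right_mono add_right_mono) auto
      also have "\<dots> = s N * (1 + 2 * w N + 8 * F) / 2" by (simp add: algebra_simps)
      finally show ?thesis .
    qed
    finally show ?thesis .
  qed
  have wl: "w \<longlonglongrightarrow> 0" using lim unfolding w_def by simp
  have "s \<longlonglongrightarrow> sqrt (0 + 0)" unfolding s_def
    by (intro tendsto_real_sqrt tendsto_add wl LIMSEQ_inverse_real_of_nat)
  then have sl: "s \<longlonglongrightarrow> 0" by simp
  have "(\<lambda>N. s N * (1 + 2 * w N + 8 * F) / 2) \<longlonglongrightarrow> 0 * (1 + 2 * 0 + 8 * F) / 2"
    by (intro tendsto_intros sl wl) simp_all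
  then have gl: "(\<lambda>N. s N * (1 + 2 * w N + 8 * F) / 2) \<longlonglongrightarrow> 0" by simp
  have ev: "eventually (\<lambda>N. norm ((\<integral>x. (f N x)\<^sup>2 \<partial>M) - F) \<le> s N * (1 + 2 * w N + 8 * F) / 2) sequentially"
    using bnd by (intro always_eventually allI) simp
  have "(\<lambda>N. (\<integral>x. (f N x)\<^sup>2 \<partial>M) - F) \<longlonglongrightarrow> 0"
    by (rule Lim_null_comparison[OF ev gl])
  then show ?thesis unfolding F_def by (rule LIM_zero_cancel)
qed

lemma orth:
  fixes e :: "nat \<Rightarrow> 'a \<Rightarrow> real"
  assumes se: "\<And>i. sqi M (e i)"
    and var: "\<And>i. (\<integral>x. (e i x)\<^sup>2 \<partial>M) = s2"
    and unc: "\<And>i j. i \<noteq> j \<Longrightarrow> (\<integral>x. e i x * e j x \<partial>M) = 0"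
  shows "(\<integral>x. (\<Sum>m<N. c m * e m x)\<^sup>2 \<partial>M) = s2 * (\<Sum>m<N. (c m)\<^sup>2)"
proof -
  have ee: "(\<integral>x. e i x * e j x \<partial>M) = (if i = j then s2 else 0)" for i j
    using var[of i] unc[of i j] by (cases "i = j") (simp_all add: power2_eq_square)
  have "(\<lambda>x. (\<Sum>m<N. c m * e m x)\<^sup>2) = (\<lambda>x. \<Sum>m<N. \<Sum>m'<N. (c m * c m') * (e m x * e m' x))"
    by (simp add: power2_eq_square sum_product algebra_simps)
  then have "(\<integral>x. (\<Sum>m<N. c m * e m x)\<^sup>2 \<partial>M) = (\<Sum>m<N. \<Sum>m'<N. (c m * c m') * (\<integral>x. e m x * e m' x \<partial>M))"
    using sqi_prod[OF se se] by (simp add: integral_sum)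
  also have "\<dots> = (\<Sum>m<N. (c m)\<^sup>2 * s2)"
    by (simp add: ee power2_eq_square if_distrib sum.delta cong: if_cong)
  finally show ?thesis by (simp add: sum_distrib_left mult.commute)
qed



lemma reidx: "(\<Sum>i<(N::nat)-j. g i) = (\<Sum>m<N. if j \<le> m then g (m - j) else (0::real))"
proof (induction N)
  case 0 then show ?case by simp
next
  case (Suc N)
  show ?case
  proof (cases "j \<le> N")
    case True
    then have "Suc N - j = Suc (N - j)" by simp
    then show ?thesis using Suc True by simp
  next
    case False
    then have "Suc N - j = N - j" by simp
    then show ?thesis using Suc False by simp
  qed
qed

definition cc :: "(nat \<Rightarrow> real) \<Rightarrow> (nat \<Rightarrow> real) \<Rightarrow> nat \<Rightarrow> nat \<Rightarrow> real" where
  "cc a b k m = (\<Sum>j\<le>k. if j \<le> m then a j * b (m - j) else 0)"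

lemma pred_limit:
  fixes M :: "'w measure" and X eps :: "int \<Rightarrow> 'w \<Rightarrow> real" and a b :: "nat \<Rightarrow> real"
  assumes X_meas: "\<And>n. X n \<in> borel_measurable M"
    and X_L2: "\<And>n. integrable M (\<lambda>\<omega>. (X n \<omega>)\<^sup>2)"
    and eps_meas: "\<And>n. eps n \<in> borel_measurable M"
    and eps_L2: "\<And>n. integrable M (\<lambda>\<omega>. (eps n \<omega>)\<^sup>2)"
    and eps_var: "\<And>n. (\<integral>\<omega>. (eps n \<omega>)\<^sup>2 \<partial>M) = s2"
    and eps_uncorr: "\<And>n m. n \<noteq> m \<Longrightarrow> (\<integral>\<omega>. eps n \<omega> * eps m \<omega> \<partial>M) = 0"
    and X_MA: "\<And>n. (\<lambda>N. \<integral>\<omega>. (X n \<omega> - (\<Sum>j<N. b j * eps (n - int j) \<omega>))\<^sup>2 \<partial>M) \<longlonglongrightarrow> 0"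
  shows "(\<lambda>N. s2 * (\<Sum>m<N. (cc a b k m)\<^sup>2)) \<longlonglongrightarrow> (\<integral>\<omega>. (\<Sum>j\<le>k. a j * X (int k + 1 - int j) \<omega>)\<^sup>2 \<partial>M)"
proof -
  define S where "S j N \<omega> = (\<Sum>i<N-j. b i * eps (int k + 1 - int j - int i) \<omega>)" for j N \<omega>
  define YN where "YN N \<omega> = (\<Sum>j\<le>k. a j * S j N \<omega>)" for N \<omega>
  define Y where "Y \<omega> = (\<Sum>j\<le>k. a j * X (int k + 1 - int j) \<omega>)" for \<omega>
  define e where "e m = eps (int k + 1 - int m)" for m
  have sX: "sqi M (X n)" for n using X_meas X_L2 unfolding sqi_def by auto
  have se: "sqi M (eps n)" for n using eps_meas eps_L2 unfolding sqi_def by auto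
  have sS: "sqi M (S j N)" for j N unfolding S_def
    by (intro sqi_sum sqi_cmult se) auto
  have sYN: "sqi M (YN N)" for N unfolding YN_def by (intro sqi_sum sqi_cmult sS) auto
  have sY: "sqi M Y" unfolding Y_def by (intro sqi_sum sqi_cmult sX) auto
  have YN_eq: "YN N \<omega> = (\<Sum>m<N. cc a b k m * e m \<omega>)" for N \<omega>
  proof -
    have "a j * S j N \<omega> = (\<Sum>m<N. (if j \<le> m then a j * b (m - j) else 0) * e m \<omega>)" for j
    proof -
      have "S j N \<omega> = (\<Sum>m<N. if j \<le> m then b (m-j) * eps (int k + 1 - int j - int (m-j)) \<omega> else 0)"
        unfolding S_def by (rule reidx)
      also have "\<dots> = (\<Sum>m<N. if j \<le> m then b (m-j) * e m \<omega> else 0)"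
        by (intro sum.cong refl) (auto simp: e_def of_nat_diff algebra_simps)
      finally have "a j * S j N \<omega> = (\<Sum>m<N. a j * (if j \<le> m then b (m-j) * e m \<omega> else 0))"
        by (simp add: sum_distrib_left)
      also have "\<dots> = (\<Sum>m<N. (if j \<le> m then a j * b (m - j) else 0) * e m \<omega>)"
        by (intro sum.cong refl) simp
      finally show ?thesis .
    qed
    then have "YN N \<omega> = (\<Sum>j\<le>k. \<Sum>m<N. (if j \<le> m then a j * b (m - j) else 0) * e m \<omega>)"
      unfolding YN_def by simp
    also have "\<dots> = (\<Sum>m<N. \<Sum>j\<le>k. (if j \<le> m then a j * b (m - j) else 0) * e m \<omega>)"
      by (rule sum.swap)
    also have "\<dots> = (\<Sum>m<N. cc a b k m * e m \<omega>)"
      unfolding cc_def by (simp add: sum_distrib_right)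
    finally show ?thesis .
  qed
  have int_YN: "(\<integral>\<omega>. (YN N \<omega>)\<^sup>2 \<partial>M) = s2 * (\<Sum>m<N. (cc a b k m)\<^sup>2)" for N
  proof -
    have "(\<integral>\<omega>. (YN N \<omega>)\<^sup>2 \<partial>M) = (\<integral>\<omega>. (\<Sum>m<N. cc a b k m * e m \<omega>)\<^sup>2 \<partial>M)"
      by (simp add: YN_eq)
    also have "\<dots> = s2 * (\<Sum>m<N. (cc a b k m)\<^sup>2)"
    proof (rule orth)
      show "sqi M (e i)" for i unfolding e_def by (rule se)
      show "(\<integral>x. (e i x)\<^sup>2 \<partial>M) = s2" for i unfolding e_def by (rule eps_var)
      show "(\<integral>x. e i x * e j x \<partial>M) = 0" if "i \<noteq> j" for i j
        unfolding e_def using that by (intro eps_uncorr) simp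
    qed
    finally show ?thesis .
  qed
  have W: "(\<lambda>N. \<integral>\<omega>. (X (int k + 1 - int j) \<omega> - S j N \<omega>)\<^sup>2 \<partial>M) \<longlonglongrightarrow> 0" for j
  proof (rule LIMSEQ_offset[where k=j])
    have "(\<lambda>N. \<integral>\<omega>. (X (int k + 1 - int j) \<omega> - S j (N + j) \<omega>)\<^sup>2 \<partial>M)
        = (\<lambda>N. \<integral>\<omega>. (X (int k + 1 - int j) \<omega> - (\<Sum>i<N. b i * eps (int k + 1 - int j - int i) \<omega>))\<^sup>2 \<partial>M)"
      unfolding S_def by simp
    then show "(\<lambda>N. \<integral>\<omega>. (X (int k + 1 - int j) \<omega> - S j (N + j) \<omega>)\<^sup>2 \<partial>M) \<longlonglongrightarrow> 0"
      using X_MA[of "int k + 1 - int j"] by simp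
  qed
  have L: "(\<lambda>N. \<integral>\<omega>. (YN N \<omega> - Y \<omega>)\<^sup>2 \<partial>M) \<longlonglongrightarrow> 0"
  proof (rule Lim_null_comparison)
    let ?g = "\<lambda>N. real (Suc k) * (\<Sum>j\<le>k. (a j)\<^sup>2 * (\<integral>\<omega>. (X (int k + 1 - int j) \<omega> - S j N \<omega>)\<^sup>2 \<partial>M))"
    show "(?g \<longlongrightarrow> 0) sequentially"
    proof -
      have "?g \<longlonglongrightarrow> real (Suc k) * (\<Sum>j\<le>k. (a j)\<^sup>2 * 0)"
        by (intro tendsto_intros W)
      then show ?thesis by simp
    qed
    show "\<forall>\<^sub>F N in sequentially. norm (\<integral>\<omega>. (YN N \<omega> - Y \<omega>)\<^sup>2 \<partial>M) \<le> ?g N"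
    proof (intro always_eventually allI)
      fix N
      have iD: "integrable M (\<lambda>\<omega>. (X (int k + 1 - int j) \<omega> - S j N \<omega>)\<^sup>2)" for j
        using sqi_diff[OF sX sS] unfolding sqi_def by auto
      have pw: "(YN N \<omega> - Y \<omega>)\<^sup>2 \<le> real (Suc k) * (\<Sum>j\<le>k. (a j)\<^sup>2 * (X (int k + 1 - int j) \<omega> - S j N \<omega>)\<^sup>2)" for \<omega>
      proof -
        have "YN N \<omega> - Y \<omega> = (\<Sum>j\<le>k. a j * (S j N \<omega> - X (int k + 1 - int j) \<omega>))"
          unfolding YN_def Y_def by (simp add: sum_subtractf right_diff_distrib)
        then have "(YN N \<omega> - Y \<omega>)\<^sup>2 \<le> (\<Sum>j\<le>k. (a j * (S j N \<omega> - X (int k + 1 - int j) \<omega>))\<^sup>2) * card {..k}"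
          using sum_squared_le_sum_of_squares by metis
        also have "\<dots> = real (Suc k) * (\<Sum>j\<le>k. (a j)\<^sup>2 * (X (int k + 1 - int j) \<omega> - S j N \<omega>)\<^sup>2)"
          by (simp add: power_mult_distrib power2_commute mult.commute)
        finally show ?thesis .
      qed
      have "(\<integral>\<omega>. (YN N \<omega> - Y \<omega>)\<^sup>2 \<partial>M) \<le> (\<integral>\<omega>. real (Suc k) * (\<Sum>j\<le>k. (a j)\<^sup>2 * (X (int k + 1 - int j) \<omega> - S j N \<omega>)\<^sup>2) \<partial>M)"
      proof (rule integral_mono')
        show "integrable M (\<lambda>\<omega>. real (Suc k) * (\<Sum>j\<le>k. (a j)\<^sup>2 * (X (int k + 1 - int j) \<omega> - S j N \<omega>)\<^sup>2))"
          using iD by (intro integrable_mult_right integrable_sum) auto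
        show "(YN N \<omega> - Y \<omega>)\<^sup>2 \<le> real (Suc k) * (\<Sum>j\<le>k. (a j)\<^sup>2 * (X (int k + 1 - int j) \<omega> - S j N \<omega>)\<^sup>2)" for \<omega>
          by (rule pw)
        show "0 \<le> real (Suc k) * (\<Sum>j\<le>k. (a j)\<^sup>2 * (X (int k + 1 - int j) \<omega> - S j N \<omega>)\<^sup>2)" for \<omega>
          by (rule order_trans[OF zero_le_power2 pw])
      qed
      also have "\<dots> = ?g N" using iD by (simp add: integral_sum)
      finally show "norm (\<integral>\<omega>. (YN N \<omega> - Y \<omega>)\<^sup>2 \<partial>M) \<le> ?g N" by simp
    qed
  qed
  have "(\<lambda>N. \<integral>\<omega>. (YN N \<omega>)\<^sup>2 \<partial>M) \<longlonglongrightarrow> (\<integral>\<omega>. (Y \<omega>)\<^sup>2 \<partial>M)"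
    by (rule L2_conv[OF sYN sY L])
  then show ?thesis unfolding int_YN Y_def .
qed



theorem proposition1:
  fixes M :: "'w measure"
    and X eps :: "int \<Rightarrow> 'w \<Rightarrow> real"
    and \<sigma> :: "int \<Rightarrow> real"
    and a b :: "nat \<Rightarrow> real"
    and s2 d :: real
  assumes prob: "prob_space M"
    \<comment> \<open>X is real, zero-mean, weakly stationary, in L^2, with autocovariance sigma\<close>
    and X_meas: "\<And>n. X n \<in> borel_measurable M"
    and X_L2: "\<And>n. integrable M (\<lambda>\<omega>. (X n \<omega>)\<^sup>2)"
    and X_mean: "\<And>n. (\<integral>\<omega>. X n \<omega> \<partial>M) = 0"
    and X_cov: "\<And>n j. (\<integral>\<omega>. X n \<omega> * X (n + j) \<omega> \<partial>M) = \<sigma> j"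
    and \<sigma>_not_abs_summable: "\<not> ((\<lambda>j. \<bar>\<sigma> j\<bar>) summable_on (UNIV :: int set))"
    \<comment> \<open>innovations: uncorrelated, mean 0, variance s2 > 0\<close>
    and eps_meas: "\<And>n. eps n \<in> borel_measurable M"
    and eps_L2: "\<And>n. integrable M (\<lambda>\<omega>. (eps n \<omega>)\<^sup>2)"
    and eps_mean: "\<And>n. (\<integral>\<omega>. eps n \<omega> \<partial>M) = 0"
    and eps_var: "\<And>n. (\<integral>\<omega>. (eps n \<omega>)\<^sup>2 \<partial>M) = s2"
    and eps_uncorr: "\<And>n m. n \<noteq> m \<Longrightarrow> (\<integral>\<omega>. eps n \<omega> * eps m \<omega> \<partial>M) = 0"
    and s2_pos: "s2 > 0"
    \<comment> \<open>MA(infinity) representation, convergent in L^2\<close>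
    and b0: "b 0 = 1"
    and b_sq: "summable (\<lambda>j. (b j)\<^sup>2)"
    and X_MA: "\<And>n. (\<lambda>N. \<integral>\<omega>. (X n \<omega> - (\<Sum>j<N. b j * eps (n - int j) \<omega>))\<^sup>2 \<partial>M) \<longlonglongrightarrow> 0"
    \<comment> \<open>AR(infinity) representation, convergent in L^2\<close>
    and a0: "a 0 = 1"
    and a_abs: "summable (\<lambda>j. \<bar>a j\<bar>)"
    and eps_AR: "\<And>n. (\<lambda>N. \<integral>\<omega>. (eps n \<omega> - (\<Sum>j<N. a j * X (n - int j) \<omega>))\<^sup>2 \<partial>M) \<longlonglongrightarrow> 0"
    \<comment> \<open>A(z) B(z) = 1 on the closed unit disc (wherever the series B(z) converges)\<close>
    and AB: "\<And>z::complex. norm z \<le> 1 \<Longrightarrow> summable (\<lambda>j. complex_of_real (b j) * z ^ j) \<Longrightarrow>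
               (\<Sum>j. complex_of_real (a j) * z ^ j) * (\<Sum>j. complex_of_real (b j) * z ^ j) = 1"
    \<comment> \<open>long memory parameter and power-law bounds on the coefficients\<close>
    and d_pos: "0 < d" and d_lt: "d < 1/2"
    and coeff_bounds: "\<And>\<delta>. \<delta> > 0 \<Longrightarrow> \<exists>C1 C2. \<forall>j\<ge>1.
               \<bar>a j\<bar> \<le> C1 * real j powr (- d - 1 + \<delta>) \<and> \<bar>b j\<bar> \<le> C2 * real j powr (d - 1 + \<delta>)"
  shows "\<forall>\<delta>>0. (\<lambda>k::nat. (\<integral>\<omega>. (X (int k + 1) \<omega> - WK_trunc_pred a X k \<omega>)\<^sup>2 \<partial>M) - s2)
            \<in> O(\<lambda>k. real k powr (-1 + \<delta>))"
proof (intro allI impI)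
  fix \<delta> :: real assume \<delta>: "\<delta> > 0"
  define \<eta> where "\<eta> = min (\<delta>/4) (min (d/2) ((1/2 - d)/2))"
  have h1: "\<eta> \<le> \<delta>/4" "\<eta> \<le> d/2" "\<eta> \<le> (1/2-d)/2" unfolding \<eta>_def
    by (rule min.cobounded1, rule order_trans[OF min.cobounded2 min.cobounded1], rule order_trans[OF min.cobounded2 min.cobounded2])
  have h0: "\<eta> > 0" using \<delta> d_pos d_lt unfolding \<eta>_def by auto
  have \<eta>: "\<eta> > 0" "\<eta> \<le> \<delta>/4" "\<eta> < d" "\<eta> < 1/2 - d" "\<eta> < 1/4"
  proof -
    show "\<eta> > 0" by (rule h0)
    show "\<eta> \<le> \<delta>/4" by (rule h1(1))
    show "\<eta> < d" using h0 h1(2) by linarith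
    have "(1/2-d)/2 < 1/2 - d" using d_lt by simp
    then show "\<eta> < 1/2 - d" using h1(3) by linarith
    have "(1/2-d)/2 < 1/4" using d_pos by simp
    then show "\<eta> < 1/4" using h1(3) by linarith
  qed
  obtain C1 C2 where CB: "\<forall>j\<ge>1. \<bar>a j\<bar> \<le> C1 * real j powr (- d - 1 + \<eta>) \<and> \<bar>b j\<bar> \<le> C2 * real j powr (d - 1 + \<eta>)"
    using coeff_bounds[OF \<eta>(1)] by blast
  define p where "p = d + 1 - \<eta>"
  define q where "q = 1 - d - \<eta>"
  have abd: "\<bar>a j\<bar> \<le> C1 * real j powr (-p)" if "j \<ge> 1" for j
    using CB that unfolding p_def by (auto simp: algebra_simps)
  have bbd: "\<bar>b j\<bar> \<le> C2 * real j powr (-q)" if "j \<ge> 1" for j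
    using CB that unfolding q_def by (auto simp: algebra_simps)
  have C10: "C1 \<ge> 0" proof -
    have "\<bar>a 1\<bar> \<le> C1" using abd[of 1] by simp
    then show ?thesis by (meson abs_ge_zero order_trans)
  qed
  have C20: "C2 \<ge> 0" proof -
    have "\<bar>b 1\<bar> \<le> C2" using bbd[of 1] by simp
    then show ?thesis by (meson abs_ge_zero order_trans)
  qed
  have conv: "(\<Sum>i\<le>m. a i * b (m-i)) = (if m = 0 then 1 else 0)" for m
    by (rule conv_id[OF a0 b0 b_sq a_abs AB])
  obtain K where K: "\<forall>k\<ge>1. \<forall>N. (\<Sum>m\<in>{k<..<N}. (\<Sum>j\<le>k. a j * b (m-j))\<^sup>2) \<le> K * real k powr (3 - 2*p - 2*q)"
  proof -
    have "\<exists>K. \<forall>k\<ge>1. \<forall>N. (\<Sum>m\<in>{k<..<N}. (\<Sum>j\<le>k. a j * b (m-j))\<^sup>2) \<le> K * real k powr (3 - 2*p - 2*q)"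
    proof (rule coef_bound[OF _ b0 C10 C20 abd bbd])
      show "(\<Sum>i\<le>m. a i * b (m-i)) = 0" if "m \<ge> 1" for m using conv[of m] that by simp
    qed (use \<eta> in \<open>auto simp: p_def q_def\<close>)
    then show ?thesis using that by blast
  qed
  have e: "3 - 2*p - 2*q = -1 + 4*\<eta>" unfolding p_def q_def by simp
  have K0: "K \<ge> 0" using K[rule_format, of 1 0] by simp
  show "(\<lambda>k::nat. (\<integral>\<omega>. (X (int k + 1) \<omega> - WK_trunc_pred a X k \<omega>)\<^sup>2 \<partial>M) - s2)
            \<in> O(\<lambda>k. real k powr (-1 + \<delta>))"
  proof (rule bigoI[where c="s2 * K"], rule eventually_at_top_linorder[THEN iffD2], intro exI allI impI)
    fix k :: nat assume k: "k \<ge> 1"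
    define E where "E = (\<integral>\<omega>. (X (int k + 1) \<omega> - WK_trunc_pred a X k \<omega>)\<^sup>2 \<partial>M)"
    have pw: "X (int k + 1) \<omega> - WK_trunc_pred a X k \<omega> = (\<Sum>j\<le>k. a j * X (int k + 1 - int j) \<omega>)" for \<omega>
    proof -
      have "{..k} = insert 0 {1..k}" by auto
      then have "(\<Sum>j\<le>k. a j * X (int k + 1 - int j) \<omega>) = a 0 * X (int k + 1) \<omega> + (\<Sum>j=1..k. a j * X (int k + 1 - int j) \<omega>)"
        by simp
      then show ?thesis unfolding WK_trunc_pred_def using a0 by simp
    qed
    have lim: "(\<lambda>N. s2 * (\<Sum>m<N. (cc a b k m)\<^sup>2)) \<longlonglongrightarrow> E"
      unfolding E_def pw by (rule pred_limit[OF X_meas X_L2 eps_meas eps_L2 eps_var eps_uncorr X_MA])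
    have ccm: "(cc a b k m)\<^sup>2 = (if m = 0 then 1 else 0) + (if k < m then (\<Sum>j\<le>k. a j * b (m-j))\<^sup>2 else 0)" for m
    proof (cases "m \<le> k")
      case True
      have "cc a b k m = (\<Sum>j\<in>{j\<in>{..k}. j \<le> m}. a j * b (m - j))"
        unfolding cc_def by (rule sum.inter_filter[symmetric]) simp
      also have "{j\<in>{..k}. j \<le> m} = {..m}" using True by auto
      finally have "cc a b k m = (if m = 0 then 1 else 0)" using conv[of m] by simp
      then show ?thesis using True by simp
    next
      case False
      then have "cc a b k m = (\<Sum>j\<le>k. a j * b (m-j))" unfolding cc_def by (intro sum.cong) auto
      then show ?thesis using False k by simp
    qed
    have dec: "(\<Sum>m<N. (cc a b k m)\<^sup>2) = (if 0 < N then 1 else 0) + (\<Sum>m\<in>{k<..<N}. (\<Sum>j\<le>k. a j * b (m-j))\<^sup>2)" for N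
    proof -
      have "(\<Sum>m<N. (cc a b k m)\<^sup>2) = (\<Sum>m<N. (if m = 0 then 1 else 0)) + (\<Sum>m<N. (if k < m then (\<Sum>j\<le>k. a j * b (m-j))\<^sup>2 else 0))"
        unfolding ccm by (rule sum.distrib)
      also have "(\<Sum>m<N. (if m = 0 then 1 else (0::real))) = (if 0 < N then 1 else 0)"
        by (simp add: sum.delta)
      also have "(\<Sum>m<N. (if k < m then (\<Sum>j\<le>k. a j * b (m-j))\<^sup>2 else 0)) = (\<Sum>m\<in>{m\<in>{..<N}. k < m}. (\<Sum>j\<le>k. a j * b (m-j))\<^sup>2)"
        by (rule sum.inter_filter[symmetric]) simp
      also have "{m\<in>{..<N}. k < m} = {k<..<N}" by auto
      finally show ?thesis .
    qed
    have up: "E \<le> s2 * (1 + K * real k powr (3 - 2*p - 2*q))"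
    proof (rule LIMSEQ_le_const2[OF lim], intro exI allI impI)
      fix N :: nat assume "N \<ge> 0"
      have "(\<Sum>m<N. (cc a b k m)\<^sup>2) \<le> 1 + K * real k powr (3 - 2*p - 2*q)"
        unfolding dec using K[rule_format, OF k, of N] K0 by simp
      then show "s2 * (\<Sum>m<N. (cc a b k m)\<^sup>2) \<le> s2 * (1 + K * real k powr (3 - 2*p - 2*q))"
        using s2_pos by (intro mult_left_mono) auto
    qed
    have lo: "s2 \<le> E"
    proof (rule LIMSEQ_le_const[OF lim], intro exI allI impI)
      fix N :: nat assume N: "N \<ge> 1"
      have "1 \<le> (\<Sum>m<N. (cc a b k m)\<^sup>2)"
        unfolding dec using N by (simp add: sum_nonneg)
      then show "s2 \<le> s2 * (\<Sum>m<N. (cc a b k m)\<^sup>2)"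
        using s2_pos by (simp add: mult_le_cancel_left1)
    qed
    have pm: "real k powr (3 - 2*p - 2*q) \<le> real k powr (-1 + \<delta>)"
      unfolding e using k \<eta> by (intro powr_mono) auto
    have "norm (E - s2) \<le> s2 * (K * real k powr (3 - 2*p - 2*q))" using up lo by (simp add: algebra_simps)
    also have "\<dots> \<le> s2 * (K * real k powr (-1 + \<delta>))"
      using pm K0 s2_pos by (intro mult_left_mono) auto
    finally show "norm (E - s2) \<le> s2 * K * norm (real k powr (-1 + \<delta>))" by simp
  qed
qed


end
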